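(* Let $\mathcal{T}$ be a tangle of order $k$ in a connectivity system $(E,\lambda)$, and let $(R,G)$ be a $\mathcal{T}$-strong $k$-separation of $\lambda$. (i) If $A\subseteq G$ is a non-empty $\mathcal{T}$-weak set such that $R\cup A$ is $k$-separating, and $G-A$ is $\mathcal{T}$-strong, then $(R,G)$ is $\mathcal{T}$-equivalent to $(R\cup A, G-A)$. (ii) If $(R,G)$ is a non-sequential $k$-separation, and $A\subseteq G$ is a non-empty $\mathcal{T}$-weak set such that $R\cup A$ is $k$-separating, then $(R\cup A, G-A)$ is $\mathcal{T}$-equivalent to $(R,G)$. (iii) If $(R,G)$ is a non-sequential $k$-separation, then $(\mathrm{fcl}_{\mathcal{T}}(R), E-\mathrm{fcl}_{\mathcal{T}}(R))$ is $\mathcal{T}$-equivalent to $(R,G)$. (iv) If $(R,G)$ is a non-sequential $k$-separation, and $X$ is a $k$-separating set such that $E-\mathrm{fcl}_{\mathcal{T}}(G)\subseteq X\subseteq R$, then $(X,E-X)$ is $\mathcal{T}$-equivalent to $(R,G)$.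
   Context: A connectivity system is a pair $(E,\lambda)$ with $E$ finite and $\lambda$ an integer-valued symmetric submodular function on subsets of $E$. $X$ is $k$-separating if $\lambda(X)\le k$; a $k$-separation is an unordered partition $(X,E-X)$ with $\lambda(X)\le k$. A tangle of order $k$ is a collection $\mathcal T$ of subsets of $E$ with (T1) $\lambda(A)<k$ for $A\in\mathcal T$; (T2) if $\lambda(A)\le k-1$ then $A\in\mathcal T$ or $E-A\in\mathcal T$; (T3) $A\cup B\cup C\ne E$ for $A,B,C\in\mathcal T$; (T4) $E-\{e\}\notin\mathcal T$ for $e\in E$. A set is $\mathcal T$-weak if contained in a member of $\mathcal T$, and $\mathcal T$-strong otherwise; a $k$-separation is $\mathcal T$-strong if both parts are. A $\mathcal T$-strong $k$-separating set $X$ is fully closed if $X\cup Y$ is not $k$-separating for every nonempty $\mathcal T$-weak $Y\subseteq E-X$; $\mathrm{fcl}_{\mathcal T}(X)$ is the intersection of all fully closed $k$-separating sets containing $X$. $\mathcal T$-strong $k$-separations $(X,Y),(X',Y')$ are $\mathcal T$-equivalent if $\{\mathrm{fcl}_{\mathcal T}(X),\mathrm{fcl}_{\mathcal T}(Y)\}=\{\mathrm{fcl}_{\mathcal T}(X'),\mathrm{fcl}_{\mathcal T}(Y')\}$. A $k$-separating set $X$ is $\mathcal T$-sequential if $E-X$ is $\mathcal T$-strong and $\mathrm{fcl}_{\mathcal T}(E-X)=E$; a $k$-separation is non-sequential if neither part is $\mathcal T$-sequential. *)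

theory Defs
  imports Main
begin

definition connectivity_system :: "'a set \<Rightarrow> ('a set \<Rightarrow> int) \<Rightarrow> bool" where
  "connectivity_system E lam \<longleftrightarrow> finite E
     \<and> (\<forall>X. X \<subseteq> E \<longrightarrow> lam X = lam (E - X))
     \<and> (\<forall>X Y. X \<subseteq> E \<longrightarrow> Y \<subseteq> E \<longrightarrow> lam X + lam Y \<ge> lam (X \<union> Y) + lam (X \<inter> Y))"

definition k_separating :: "('a set \<Rightarrow> int) \<Rightarrow> int \<Rightarrow> 'a set \<Rightarrow> bool" where
  "k_separating lam k X \<longleftrightarrow> lam X \<le> k"

definition tangle :: "'a set \<Rightarrow> ('a set \<Rightarrow> int) \<Rightarrow> int \<Rightarrow> 'a set set \<Rightarrow> bool" where
  "tangle E lam k T \<longleftrightarrow> T \<subseteq> Pow E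
     \<and> (\<forall>A\<in>T. lam A < k)
     \<and> (\<forall>A. A \<subseteq> E \<longrightarrow> lam A \<le> k - 1 \<longrightarrow> A \<in> T \<or> E - A \<in> T)
     \<and> (\<forall>A\<in>T. \<forall>B\<in>T. \<forall>C\<in>T. A \<union> B \<union> C \<noteq> E)
     \<and> (\<forall>e\<in>E. E - {e} \<notin> T)"

definition T_weak :: "'a set set \<Rightarrow> 'a set \<Rightarrow> bool" where
  "T_weak T Y \<longleftrightarrow> (\<exists>A\<in>T. Y \<subseteq> A)"

definition T_strong :: "'a set set \<Rightarrow> 'a set \<Rightarrow> bool" where
  "T_strong T Y \<longleftrightarrow> \<not> T_weak T Y"

definition T_strong_sep :: "'a set \<Rightarrow> ('a set \<Rightarrow> int) \<Rightarrow> int \<Rightarrow> 'a set set \<Rightarrow> 'a set \<Rightarrow> 'a set \<Rightarrow> bool" where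
  "T_strong_sep E lam k T X Y \<longleftrightarrow> X \<union> Y = E \<and> X \<inter> Y = {} \<and> k_separating lam k X
     \<and> T_strong T X \<and> T_strong T Y"

definition fully_closed :: "'a set \<Rightarrow> ('a set \<Rightarrow> int) \<Rightarrow> int \<Rightarrow> 'a set set \<Rightarrow> 'a set \<Rightarrow> bool" where
  "fully_closed E lam k T X \<longleftrightarrow> X \<subseteq> E \<and> T_strong T X \<and> k_separating lam k X
     \<and> (\<forall>Y. Y \<subseteq> E - X \<longrightarrow> Y \<noteq> {} \<longrightarrow> T_weak T Y \<longrightarrow> \<not> k_separating lam k (X \<union> Y))"

text \<open>Full closure: intersection of all fully closed k-separating sets containing X
(taken inside E, so the empty intersection is E).\<close>
definition fcl :: "'a set \<Rightarrow> ('a set \<Rightarrow> int) \<Rightarrow> int \<Rightarrow> 'a set set \<Rightarrow> 'a set \<Rightarrow> 'a set" where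
  "fcl E lam k T X = E \<inter> \<Inter> {Z. fully_closed E lam k T Z \<and> X \<subseteq> Z}"

definition T_equivalent :: "'a set \<Rightarrow> ('a set \<Rightarrow> int) \<Rightarrow> int \<Rightarrow> 'a set set
    \<Rightarrow> 'a set \<Rightarrow> 'a set \<Rightarrow> 'a set \<Rightarrow> 'a set \<Rightarrow> bool" where
  "T_equivalent E lam k T X Y X' Y' \<longleftrightarrow>
     T_strong_sep E lam k T X Y \<and> T_strong_sep E lam k T X' Y'
     \<and> {fcl E lam k T X, fcl E lam k T Y} = {fcl E lam k T X', fcl E lam k T Y'}"

definition T_sequential :: "'a set \<Rightarrow> ('a set \<Rightarrow> int) \<Rightarrow> int \<Rightarrow> 'a set set \<Rightarrow> 'a set \<Rightarrow> bool" where
  "T_sequential E lam k T X \<longleftrightarrow> k_separating lam k X \<and> T_strong T (E - X)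
     \<and> fcl E lam k T (E - X) = E"

definition non_sequential :: "'a set \<Rightarrow> ('a set \<Rightarrow> int) \<Rightarrow> int \<Rightarrow> 'a set set \<Rightarrow> 'a set \<Rightarrow> 'a set \<Rightarrow> bool" where
  "non_sequential E lam k T X Y \<longleftrightarrow> \<not> T_sequential E lam k T X \<and> \<not> T_sequential E lam k T Y"

end

theory Submission
  imports Defs
begin

lemma maxcard:
  assumes "finite E" "Y0 \<in> P" "\<forall>Y\<in>P. Y \<subseteq> E"
  shows "\<exists>Y\<in>P. \<forall>Y'\<in>P. card Y' \<le> card Y"
proof -
  have "\<exists>x. (\<exists>Y\<in>P. card Y = x) \<and> (\<forall>y. (\<exists>Y\<in>P. card Y = y) \<longrightarrow> y \<le> x)"
    apply (rule Nat.ex_has_greatest_nat[where k="card Y0" and b="card E"])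
    using assms by (auto intro: card_mono)
  then show ?thesis by blast
qed

lemma cs_sym: "connectivity_system E lam \<Longrightarrow> X \<subseteq> E \<Longrightarrow> lam (E - X) = lam X"
  unfolding connectivity_system_def by metis

lemma cs_sub: "connectivity_system E lam \<Longrightarrow> X \<subseteq> E \<Longrightarrow> Y \<subseteq> E
   \<Longrightarrow> lam X + lam Y \<ge> lam (X \<union> Y) + lam (X \<inter> Y)"
  unfolding connectivity_system_def by blast

lemma cs_fin: "connectivity_system E lam \<Longrightarrow> finite E"
  unfolding connectivity_system_def by blast

lemma lam_empty: assumes "connectivity_system E lam" "X \<subseteq> E" shows "lam {} \<le> lam X"
proof -
  have "lam X + lam (E - X) \<ge> lam (X \<union> (E - X)) + lam (X \<inter> (E - X))"
    using cs_sub[OF assms(1) assms(2), of "E - X"] by blast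
  moreover have "X \<union> (E - X) = E" "X \<inter> (E - X) = {}" using assms(2) by auto
  moreover have "lam E = lam {}" using cs_sym[OF assms(1), of E] by simp
  ultimately show ?thesis using cs_sym[OF assms] by simp
qed

lemma lam_E: "connectivity_system E lam \<Longrightarrow> lam E = lam {}"
  using cs_sym[of E lam E] by simp

lemma weak_mono: "T_weak T Y \<Longrightarrow> X \<subseteq> Y \<Longrightarrow> T_weak T X"
  unfolding T_weak_def by blast

lemma strong_mono: "T_strong T X \<Longrightarrow> X \<subseteq> Y \<Longrightarrow> T_strong T Y"
  unfolding T_strong_def using weak_mono by blast

lemma inT_weak: "A \<in> T \<Longrightarrow> T_weak T A"
  unfolding T_weak_def by blast

lemma tg2:
  assumes "tangle E lam k T" "A \<subseteq> E" "lam A \<le> k - 1" shows "A \<in> T \<or> E - A \<in> T"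
proof -
  have "\<forall>A. A \<subseteq> E \<longrightarrow> lam A \<le> k - 1 \<longrightarrow> A \<in> T \<or> E - A \<in> T"
    using assms(1) unfolding tangle_def by (elim conjE)
  then show ?thesis using assms(2,3) by blast
qed

lemma absorb:
  assumes cs: "connectivity_system E lam" and tg: "tangle E lam k T"
    and fc: "fully_closed E lam k T Z" and XZ: "X \<subseteq> Z" and sX: "T_strong T X"
    and wY: "T_weak T Y" and YE: "Y \<subseteq> E" and kXY: "lam (X \<union> Y) \<le> k"
    and e: "lam {} \<le> k"
  shows "Y \<subseteq> Z"
proof -
  have ZE: "Z \<subseteq> E" using fc unfolding fully_closed_def by blast
  have lZ: "lam Z \<le> k" using fc unfolding fully_closed_def k_separating_def by blast
  have cl: "\<And>Y. Y \<subseteq> E - Z \<Longrightarrow> Y \<noteq> {} \<Longrightarrow> T_weak T Y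
      \<Longrightarrow> \<not> lam (Z \<union> Y) \<le> k"
    using fc unfolding fully_closed_def k_separating_def by blast
  have XE: "X \<subseteq> E" using XZ ZE by blast
  define W where "W = Z \<inter> (X \<union> Y)"
  have WE: "W \<subseteq> E" using W_def ZE by blast
  have XW: "X \<subseteq> W" using XZ W_def by blast
  have sW: "T_strong T W" using strong_mono[OF sX XW] .
  show ?thesis
  proof (cases "lam W \<le> k - 1")
    case True
    have "W \<notin> T" using sW inT_weak unfolding T_strong_def by blast
    then have "E - W \<in> T" using tg2[OF tg WE True] by blast
    moreover have "E - Z \<subseteq> E - W" using W_def by blast
    ultimately have wEZ: "T_weak T (E - Z)" using inT_weak weak_mono by blast
    show ?thesis
    proof (cases "E - Z = {}")
      case True then show ?thesis using YE by blast
    next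
      case False
      have "\<not> lam (Z \<union> (E - Z)) \<le> k" using cl[OF _ False wEZ] by blast
      moreover have "Z \<union> (E - Z) = E" using ZE by blast
      ultimately show ?thesis using lam_E[OF cs] e by simp
    qed
  next
    case False
    have XYE: "X \<union> Y \<subseteq> E" using XE YE by blast
    have "lam Z + lam (X \<union> Y) \<ge> lam (Z \<union> (X \<union> Y)) + lam (Z \<inter> (X \<union> Y))"
      using cs_sub[OF cs ZE XYE] .
    moreover have "Z \<union> (X \<union> Y) = Z \<union> (Y - Z)" using XZ by blast
    ultimately have l: "lam (Z \<union> (Y - Z)) \<le> k" using lZ kXY False W_def by simp
    show ?thesis
    proof (rule ccontr)
      assume "\<not> Y \<subseteq> Z"
      then have ne: "Y - Z \<noteq> {}" by blast
      have "Y - Z \<subseteq> E - Z" using YE by blast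
      moreover have "T_weak T (Y - Z)" using weak_mono[OF wY] by blast
      ultimately show False using cl[OF _ ne] l by blast
    qed
  qed
qed

lemma fcl_eq_add:
  assumes cs: "connectivity_system E lam" and tg: "tangle E lam k T"
    and sX: "T_strong T X"
    and wY: "T_weak T Y" and YE: "Y \<subseteq> E" and kXY: "lam (X \<union> Y) \<le> k"
    and e: "lam {} \<le> k"
  shows "fcl E lam k T (X \<union> Y) = fcl E lam k T X"
proof -
  have "{Z. fully_closed E lam k T Z \<and> X \<union> Y \<subseteq> Z} = {Z. fully_closed E lam k T Z \<and> X \<subseteq> Z}"
    using absorb[OF cs tg _ _ sX wY YE kXY e] by blast
  then show ?thesis unfolding fcl_def by simp
qed

lemma fcl_mono: "X \<subseteq> Y \<Longrightarrow> fcl E lam k T X \<subseteq> fcl E lam k T Y"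
  unfolding fcl_def by blast

lemma fcl_least: "fully_closed E lam k T Z \<Longrightarrow> X \<subseteq> Z \<Longrightarrow> fcl E lam k T X \<subseteq> Z"
  unfolding fcl_def by blast

lemma fcl_E: "fcl E lam k T X \<subseteq> E"
  unfolding fcl_def by blast

lemma fcl_fc:
  assumes cs: "connectivity_system E lam" and tg: "tangle E lam k T"
    and XE: "X \<subseteq> E" and sX: "T_strong T X" and kX: "lam X \<le> k"
  shows "fully_closed E lam k T (fcl E lam k T X) \<and> X \<subseteq> fcl E lam k T X"
proof -
  have e: "lam {} \<le> k" using lam_empty[OF cs XE] kX by simp
  define P where "P = {Y. X \<subseteq> Y \<and> Y \<subseteq> E \<and> lam Y \<le> k
      \<and> (\<forall>Z. fully_closed E lam k T Z \<and> X \<subseteq> Z \<longrightarrow> Y \<subseteq> Z)}"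
  have XP: "X \<in> P" using P_def XE kX by blast
  obtain Y where YP: "Y \<in> P" and mx: "\<forall>Y'\<in>P. card Y' \<le> card Y"
    using maxcard[OF cs_fin[OF cs] XP] P_def by blast
  have YE: "Y \<subseteq> E" and XY: "X \<subseteq> Y" and kY: "lam Y \<le> k"
    and sub: "\<And>Z. fully_closed E lam k T Z \<Longrightarrow> X \<subseteq> Z \<Longrightarrow> Y \<subseteq> Z" using YP P_def by auto
  have sY: "T_strong T Y" using strong_mono[OF sX XY] .
  have fcY: "fully_closed E lam k T Y"
    unfolding fully_closed_def k_separating_def
  proof (intro conjI YE sY kY allI impI)
    fix W assume WEY: "W \<subseteq> E - Y" and Wne: "W \<noteq> {}" and wW: "T_weak T W"
    show "\<not> lam (Y \<union> W) \<le> k"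
    proof
      assume kYW: "lam (Y \<union> W) \<le> k"
      have "Y \<union> W \<in> P" unfolding P_def
      proof (intro CollectI conjI allI impI)
        fix Z assume "fully_closed E lam k T Z \<and> X \<subseteq> Z"
        then have fZ: "fully_closed E lam k T Z" and "Y \<subseteq> Z" using sub by auto
        moreover have "W \<subseteq> Z" using absorb[OF cs tg fZ \<open>Y \<subseteq> Z\<close> sY wW _ kYW e] WEY by blast
        ultimately show "Y \<union> W \<subseteq> Z" by blast
      qed (use XY YE WEY kYW in auto)
      then have "card (Y \<union> W) \<le> card Y" using mx by blast
      moreover have ps: "Y \<subset> Y \<union> W" using WEY Wne by blast
      moreover have "Y \<union> W \<subseteq> E" using YE WEY by blast
      then have "finite (Y \<union> W)" using finite_subset cs_fin[OF cs] by blast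
      ultimately show False using psubset_card_mono[OF _ ps] by linarith
    qed
  qed
  have "fcl E lam k T X = Y"
  proof
    show "fcl E lam k T X \<subseteq> Y" using fcl_least[OF fcY XY] .
    show "Y \<subseteq> fcl E lam k T X" unfolding fcl_def using YE sub by blast
  qed
  then show ?thesis using fcY XY by simp
qed

lemma fc_compl:
  assumes cs: "connectivity_system E lam" and fc: "fully_closed E lam k T Z"
    and ne: "Z \<noteq> E" and e: "lam {} \<le> k"
  shows "T_strong T (E - Z)"
proof -
  have ZE: "Z \<subseteq> E" using fc unfolding fully_closed_def by blast
  have ne2: "E - Z \<noteq> {}" using ZE ne by blast
  have U: "Z \<union> (E - Z) = E" using ZE by blast
  have cl: "\<And>Y. Y \<subseteq> E - Z \<Longrightarrow> Y \<noteq> {} \<Longrightarrow> T_weak T Y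
      \<Longrightarrow> \<not> lam (Z \<union> Y) \<le> k"
    using fc unfolding fully_closed_def k_separating_def by blast
  show ?thesis unfolding T_strong_def
  proof
    assume w: "T_weak T (E - Z)"
    have "\<not> lam (Z \<union> (E - Z)) \<le> k" using cl[OF subset_refl ne2 w] .
    then show False using U lam_E[OF cs] e by simp
  qed
qed

lemma chain:
  assumes cs: "connectivity_system E lam" and tg: "tangle E lam k T"
    and sep: "T_strong_sep E lam k T R G"
    and ne: "fcl E lam k T G \<noteq> E"
  shows "fcl E lam k T (E - fcl E lam k T G) = fcl E lam k T R"
proof -
  have RGE: "R \<union> G = E" and dj: "R \<inter> G = {}" and kR: "lam R \<le> k" and sG: "T_strong T G"
    using sep unfolding T_strong_sep_def k_separating_def by auto
  have GE: "G \<subseteq> E" and RE: "R \<subseteq> E" using RGE by auto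
  have R_eq: "R = E - G" using RGE dj by blast
  have kG: "lam G \<le> k" using cs_sym[OF cs GE] R_eq kR by simp
  have e: "lam {} \<le> k" using lam_empty[OF cs RE] kR by simp
  define H where "H = fcl E lam k T G"
  have fH: "fully_closed E lam k T H" and GH: "G \<subseteq> H" using fcl_fc[OF cs tg GE sG kG] unfolding H_def by simp_all
  have HE: "H \<subseteq> E" unfolding H_def by (rule fcl_E)
  have sEH: "T_strong T (E - H)" using fc_compl[OF cs fH _ e] ne H_def by blast
  define P where "P = {Y. G \<subseteq> Y \<and> Y \<subseteq> H \<and> lam Y \<le> k \<and> fcl E lam k T (E - Y) = fcl E lam k T R}"
  have GP: "G \<in> P" using P_def GH kG R_eq by simp
  obtain Y where YP: "Y \<in> P" and mx: "\<forall>Y'\<in>P. card Y' \<le> card Y"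
    using maxcard[OF cs_fin[OF cs] GP] P_def HE by blast
  have GY: "G \<subseteq> Y" and YH: "Y \<subseteq> H" and kY: "lam Y \<le> k"
    and fY: "fcl E lam k T (E - Y) = fcl E lam k T R" using YP P_def by auto
  have YE: "Y \<subseteq> E" using YH HE by blast
  have sY: "T_strong T Y" using strong_mono[OF sG GY] .
  have fcY: "fully_closed E lam k T Y"
    unfolding fully_closed_def k_separating_def
  proof (intro conjI YE sY kY allI impI)
    fix W assume WEY: "W \<subseteq> E - Y" and Wne: "W \<noteq> {}" and wW: "T_weak T W"
    show "\<not> lam (Y \<union> W) \<le> k"
    proof
      assume kYW: "lam (Y \<union> W) \<le> k"
      have WH: "W \<subseteq> H" using absorb[OF cs tg fH YH sY wW _ kYW e] WEY by blast
      have "E - H \<subseteq> E - (Y \<union> W)" using YH WH by blast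
      then have sX': "T_strong T (E - (Y \<union> W))" by (rule strong_mono[OF sEH])
      have eqU: "(E - (Y \<union> W)) \<union> W = E - Y" using WEY by blast
      have "lam ((E - (Y \<union> W)) \<union> W) \<le> k" using eqU cs_sym[OF cs YE] kY by simp
      then have "fcl E lam k T ((E - (Y \<union> W)) \<union> W) = fcl E lam k T (E - (Y \<union> W))"
        using fcl_eq_add[OF cs tg sX' wW _ _ e] WEY by blast
      then have "fcl E lam k T (E - (Y \<union> W)) = fcl E lam k T R" using eqU fY by simp
      then have "Y \<union> W \<in> P" unfolding P_def using GY YH WH kYW by blast
      then have "card (Y \<union> W) \<le> card Y" using mx by blast
      moreover have ps: "Y \<subset> Y \<union> W" using WEY Wne by blast
      moreover have "Y \<union> W \<subseteq> E" using YE WEY by blast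
      then have "finite (Y \<union> W)" using finite_subset cs_fin[OF cs] by blast
      ultimately show False using psubset_card_mono[OF _ ps] by linarith
    qed
  qed
  have "H \<subseteq> Y" using fcl_least[OF fcY GY] H_def by simp
  then have "Y = H" using YH by blast
  then show ?thesis using fY H_def by simp
qed

lemma sep_swap:
  assumes cs: "connectivity_system E lam" and s: "T_strong_sep E lam k T X Y"
  shows "T_strong_sep E lam k T Y X"
proof -
  have "X = E - Y" "Y \<subseteq> E" using s unfolding T_strong_sep_def by auto
  then show ?thesis using s cs_sym[OF cs] unfolding T_strong_sep_def k_separating_def by auto
qed

lemma equiv_sym: "T_equivalent E lam k T X Y X' Y' \<Longrightarrow> T_equivalent E lam k T X' Y' X Y"
  unfolding T_equivalent_def by auto

lemma equiv_swap: "connectivity_system E lam \<Longrightarrow> T_equivalent E lam k T X Y X' Y'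
   \<Longrightarrow> T_equivalent E lam k T Y X Y' X'"
  unfolding T_equivalent_def using sep_swap by (metis insert_commute)

lemma part4:
  assumes cs: "connectivity_system E lam" and tg: "tangle E lam k T"
    and sep: "T_strong_sep E lam k T R G"
    and nsR: "\<not> T_sequential E lam k T R"
    and kX: "k_separating lam k X" and X1: "E - fcl E lam k T G \<subseteq> X" and X2: "X \<subseteq> R"
  shows "T_equivalent E lam k T X (E - X) R G"
proof -
  have RGE: "R \<union> G = E" and dj: "R \<inter> G = {}" and kR: "lam R \<le> k" and sG: "T_strong T G"
    and sR: "T_strong T R"
    using sep unfolding T_strong_sep_def k_separating_def by auto
  have GE: "G \<subseteq> E" and RE: "R \<subseteq> E" using RGE by auto
  have G_eq: "G = E - R" using RGE dj by blast
  have kG: "lam G \<le> k" using cs_sym[OF cs RE] G_eq kR by simp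
  have e: "lam {} \<le> k" using lam_empty[OF cs RE] kR by simp
  define H where "H = fcl E lam k T G"
  have ne: "H \<noteq> E" using nsR H_def G_eq kR sG unfolding T_sequential_def k_separating_def by auto
  have fH: "fully_closed E lam k T H" and GH: "G \<subseteq> H" using fcl_fc[OF cs tg GE sG kG] unfolding H_def by simp_all
  have HE: "H \<subseteq> E" unfolding H_def by (rule fcl_E)
  have sEH: "T_strong T (E - H)" using fc_compl[OF cs fH ne e] .
  have XE: "X \<subseteq> E" using X2 RE by blast
  have "E - H \<subseteq> X" using X1 unfolding H_def .
  then have sX: "T_strong T X" by (rule strong_mono[OF sEH])
  have "G \<subseteq> E - X" using X2 G_eq by blast
  then have sEX: "T_strong T (E - X)" by (rule strong_mono[OF sG])
  have sep2: "T_strong_sep E lam k T X (E - X)"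
    unfolding T_strong_sep_def using XE kX sX sEX by blast
  have c: "fcl E lam k T (E - H) = fcl E lam k T R" using chain[OF cs tg sep] ne H_def by simp
  have f1: "fcl E lam k T X = fcl E lam k T R"
    using fcl_mono[of "E - H" X] fcl_mono[OF X2] c X1 H_def by blast
  have "E - X \<subseteq> H" using X1 H_def HE by blast
  then have "fcl E lam k T (E - X) \<subseteq> H" using fcl_least[OF fH] by blast
  moreover have "H \<subseteq> fcl E lam k T (E - X)" using fcl_mono[of G "E - X"] H_def G_eq X2 by blast
  ultimately have f2: "fcl E lam k T (E - X) = fcl E lam k T G" using H_def by blast
  show ?thesis unfolding T_equivalent_def using sep sep2 f1 f2 by simp
qed

theorem lemma3p8:
  fixes E :: "'a set" and lam :: "'a set \<Rightarrow> int" and k :: int and T :: "'a set set"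
    and R G :: "'a set"
  assumes cs: "connectivity_system E lam"
    and tg: "tangle E lam k T"
    and sep: "T_strong_sep E lam k T R G"
  shows
    "(\<forall>A. A \<subseteq> G \<longrightarrow> A \<noteq> {} \<longrightarrow> T_weak T A \<longrightarrow> k_separating lam k (R \<union> A)
        \<longrightarrow> T_strong T (G - A) \<longrightarrow> T_equivalent E lam k T R G (R \<union> A) (G - A))
   \<and> (non_sequential E lam k T R G \<longrightarrow>
        (\<forall>A. A \<subseteq> G \<longrightarrow> A \<noteq> {} \<longrightarrow> T_weak T A \<longrightarrow> k_separating lam k (R \<union> A)
           \<longrightarrow> T_equivalent E lam k T (R \<union> A) (G - A) R G))
   \<and> (non_sequential E lam k T R G \<longrightarrow>
        T_equivalent E lam k T (fcl E lam k T R) (E - fcl E lam k T R) R G)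
   \<and> (non_sequential E lam k T R G \<longrightarrow>
        (\<forall>X. k_separating lam k X \<longrightarrow> E - fcl E lam k T G \<subseteq> X \<longrightarrow> X \<subseteq> R
           \<longrightarrow> T_equivalent E lam k T X (E - X) R G))"
proof -
  have RGE: "R \<union> G = E" and dj: "R \<inter> G = {}" and kR: "lam R \<le> k" and sG: "T_strong T G"
    and sR: "T_strong T R"
    using sep unfolding T_strong_sep_def k_separating_def by auto
  have GE: "G \<subseteq> E" and RE: "R \<subseteq> E" using RGE by auto
  have G_eq: "G = E - R" and R_eq: "R = E - G" using RGE dj by blast+
  have kG: "lam G \<le> k" using cs_sym[OF cs RE] G_eq kR by simp
  have e: "lam {} \<le> k" using lam_empty[OF cs RE] kR by simp
  have P1: "\<forall>A. A \<subseteq> G \<longrightarrow> A \<noteq> {} \<longrightarrow> T_weak T A \<longrightarrow> k_separating lam k (R \<union> A)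
        \<longrightarrow> T_strong T (G - A) \<longrightarrow> T_equivalent E lam k T R G (R \<union> A) (G - A)"
  proof (intro allI impI)
    fix A assume AG: "A \<subseteq> G" and "A \<noteq> {}" and wA: "T_weak T A" and kRA: "k_separating lam k (R \<union> A)"
      and sGA: "T_strong T (G - A)"
    have sep2: "T_strong_sep E lam k T (R \<union> A) (G - A)"
      unfolding T_strong_sep_def
    proof (intro conjI kRA sGA)
      show "R \<union> A \<union> (G - A) = E" using RGE AG by blast
      show "(R \<union> A) \<inter> (G - A) = {}" using dj by blast
      show "T_strong T (R \<union> A)" using strong_mono[OF sR, of "R \<union> A"] by simp
    qed
    have AE: "A \<subseteq> E" using AG GE by blast
    have f1: "fcl E lam k T (R \<union> A) = fcl E lam k T R"
      using fcl_eq_add[OF cs tg sR wA AE _ e] kRA unfolding k_separating_def by blast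
    have "(G - A) \<union> A = G" using AG by blast
    then have f2: "fcl E lam k T G = fcl E lam k T (G - A)"
      using fcl_eq_add[OF cs tg sGA wA AE _ e] kG by simp
    show "T_equivalent E lam k T R G (R \<union> A) (G - A)"
      unfolding T_equivalent_def using sep sep2 f1 f2 by simp
  qed
  have P4: "non_sequential E lam k T R G \<longrightarrow>
        (\<forall>X. k_separating lam k X \<longrightarrow> E - fcl E lam k T G \<subseteq> X \<longrightarrow> X \<subseteq> R
           \<longrightarrow> T_equivalent E lam k T X (E - X) R G)"
    using part4[OF cs tg sep] unfolding non_sequential_def by blast
  have P2: "non_sequential E lam k T R G \<longrightarrow>
        (\<forall>A. A \<subseteq> G \<longrightarrow> A \<noteq> {} \<longrightarrow> T_weak T A \<longrightarrow> k_separating lam k (R \<union> A)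
           \<longrightarrow> T_equivalent E lam k T (R \<union> A) (G - A) R G)"
  proof (intro impI allI)
    fix A assume ns: "non_sequential E lam k T R G" and AG: "A \<subseteq> G" and Ane: "A \<noteq> {}"
      and wA: "T_weak T A" and kRA: "k_separating lam k (R \<union> A)"
    have AE: "A \<subseteq> E" using AG GE by blast
    have sGA: "T_strong T (G - A)"
    proof (rule ccontr)
      assume "\<not> T_strong T (G - A)"
      then have wGA: "T_weak T (G - A)" unfolding T_strong_def by simp
      define F where "F = fcl E lam k T R"
      have f1: "fcl E lam k T (R \<union> A) = F"
        using fcl_eq_add[OF cs tg sR wA AE _ e] kRA F_def unfolding k_separating_def by blast
      have "R \<union> A \<subseteq> E" using RE AE by blast
      then have "R \<union> A \<subseteq> fcl E lam k T (R \<union> A)"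
        using fcl_fc[OF cs tg _ strong_mono[OF sR, of "R \<union> A"]] kRA unfolding k_separating_def by simp
      then have "R \<union> A \<subseteq> F" using f1 by simp
      have fF: "fully_closed E lam k T F" using fcl_fc[OF cs tg RE sR kR] unfolding F_def by simp
      have "F = E"
      proof (rule ccontr)
        assume "F \<noteq> E"
        then have "T_strong T (E - F)" using fc_compl[OF cs fF _ e] by blast
        moreover have "E - F \<subseteq> G - A" using \<open>R \<union> A \<subseteq> F\<close> G_eq by blast
        ultimately have "T_strong T (G - A)" by (rule strong_mono)
        then show False using wGA unfolding T_strong_def by simp
      qed
      then have "T_sequential E lam k T G"
        unfolding T_sequential_def k_separating_def using kG R_eq sR F_def by simp
      then show False using ns unfolding non_sequential_def by blast
    qed
    show "T_equivalent E lam k T (R \<union> A) (G - A) R G"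
      using equiv_sym[OF P1[rule_format, OF AG Ane wA kRA sGA]] .
  qed
  have P3: "non_sequential E lam k T R G \<longrightarrow>
        T_equivalent E lam k T (fcl E lam k T R) (E - fcl E lam k T R) R G"
  proof
    assume ns: "non_sequential E lam k T R G"
    define F where "F = fcl E lam k T R"
    have fF: "fully_closed E lam k T F" and RF: "R \<subseteq> F" using fcl_fc[OF cs tg RE sR kR] unfolding F_def by simp_all
    have FE: "F \<subseteq> E" unfolding F_def by (rule fcl_E)
    have kEF: "k_separating lam k (E - F)" using fF cs_sym[OF cs FE]
      unfolding fully_closed_def k_separating_def by simp
    have "T_equivalent E lam k T (E - F) (E - (E - F)) G R"
      apply (rule part4[OF cs tg sep_swap[OF cs sep]])
      using ns kEF RF G_eq F_def unfolding non_sequential_def by auto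
    moreover have "E - (E - F) = F" using FE by blast
    ultimately have "T_equivalent E lam k T (E - F) F G R" by simp
    then show "T_equivalent E lam k T F (E - F) R G" using equiv_swap[OF cs] by blast
  qed
  show ?thesis using P1 P2 P3 P4 by blast
qed

end
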